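(* Let $G$ be a compact Hausdorff topological group and $p\colon E\to B$ a $G$-map of Hausdorff $G$-spaces. If $B$ is $G$-connected and $E^G\neq\emptyset$, then $\mathrm{secat}_G(p)\le\mathrm{cat}_G(B)$.
   Context: $X^H=\{x: hx=x\ \forall h\in H\}$; $X$ is $G$-connected if $X^H$ is path-connected for every closed subgroup $H\le G$. A $G$-homotopy is an equivariant homotopy with $G$ acting trivially on $I$. An invariant set $U\subseteq B$ is $G$-categorical if its inclusion is $G$-homotopic to a map with values in a single orbit; $\mathrm{cat}_G(B)$ is the least $k$ such that $B$ is covered by $k$ open $G$-categorical sets. $\mathrm{secat}_G(p)$ is the least $k$ such that $B$ is covered by $k$ invariant open sets $U_i$ each admitting a $G$-map $s\colon U_i\to E$ with $ps$ $G$-homotopic to the inclusion $U_i\hookrightarrow B$ ($\infty$ if none). *)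

theory Defs
  imports "HOL-Analysis.Analysis"
begin

definition topological_group ::
  "'g topology \<Rightarrow> ('g \<Rightarrow> 'g \<Rightarrow> 'g) \<Rightarrow> ('g \<Rightarrow> 'g) \<Rightarrow> 'g \<Rightarrow> bool" where
  "topological_group TG mul ginv e \<longleftrightarrow>
     e \<in> topspace TG \<and>
     (\<forall>x\<in>topspace TG. \<forall>y\<in>topspace TG. mul x y \<in> topspace TG) \<and>
     (\<forall>x\<in>topspace TG. ginv x \<in> topspace TG) \<and>
     (\<forall>x\<in>topspace TG. \<forall>y\<in>topspace TG. \<forall>z\<in>topspace TG. mul (mul x y) z = mul x (mul y z)) \<and>
     (\<forall>x\<in>topspace TG. mul e x = x \<and> mul x e = x) \<and>
     (\<forall>x\<in>topspace TG. mul (ginv x) x = e \<and> mul x (ginv x) = e) \<and>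
     continuous_map (prod_topology TG TG) TG (\<lambda>(x, y). mul x y) \<and>
     continuous_map TG TG ginv"

definition G_space ::
  "'g topology \<Rightarrow> ('g \<Rightarrow> 'g \<Rightarrow> 'g) \<Rightarrow> 'g \<Rightarrow> 'a topology \<Rightarrow> ('g \<Rightarrow> 'a \<Rightarrow> 'a) \<Rightarrow> bool" where
  "G_space TG mul e X act \<longleftrightarrow>
     continuous_map (prod_topology TG X) X (\<lambda>(g, x). act g x) \<and>
     (\<forall>x\<in>topspace X. act e x = x) \<and>
     (\<forall>g\<in>topspace TG. \<forall>h\<in>topspace TG. \<forall>x\<in>topspace X. act (mul g h) x = act g (act h x))"

definition equivariant ::
  "'g set \<Rightarrow> 'a topology \<Rightarrow> ('g \<Rightarrow> 'a \<Rightarrow> 'a) \<Rightarrow> ('g \<Rightarrow> 'b \<Rightarrow> 'b) \<Rightarrow> ('a \<Rightarrow> 'b) \<Rightarrow> bool" where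
  "equivariant G X actX actY f \<longleftrightarrow>
     (\<forall>g\<in>G. \<forall>x\<in>topspace X. f (actX g x) = actY g (f x))"

definition G_map ::
  "'g set \<Rightarrow> 'a topology \<Rightarrow> ('g \<Rightarrow> 'a \<Rightarrow> 'a) \<Rightarrow> 'b topology \<Rightarrow> ('g \<Rightarrow> 'b \<Rightarrow> 'b) \<Rightarrow> ('a \<Rightarrow> 'b) \<Rightarrow> bool" where
  "G_map G X actX Y actY f \<longleftrightarrow> continuous_map X Y f \<and> equivariant G X actX actY f"

text \<open>G-homotopy: homotopy through equivariant maps (G acts trivially on I).\<close>
definition G_homotopic ::
  "'g set \<Rightarrow> 'a topology \<Rightarrow> ('g \<Rightarrow> 'a \<Rightarrow> 'a) \<Rightarrow> 'b topology \<Rightarrow> ('g \<Rightarrow> 'b \<Rightarrow> 'b)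
     \<Rightarrow> ('a \<Rightarrow> 'b) \<Rightarrow> ('a \<Rightarrow> 'b) \<Rightarrow> bool" where
  "G_homotopic G X actX Y actY f f' \<longleftrightarrow>
     homotopic_with (equivariant G X actX actY) X Y f f'"

definition closed_subgroup ::
  "'g topology \<Rightarrow> ('g \<Rightarrow> 'g \<Rightarrow> 'g) \<Rightarrow> ('g \<Rightarrow> 'g) \<Rightarrow> 'g \<Rightarrow> 'g set \<Rightarrow> bool" where
  "closed_subgroup TG mul ginv e H \<longleftrightarrow>
     H \<subseteq> topspace TG \<and> closedin TG H \<and> e \<in> H \<and>
     (\<forall>x\<in>H. \<forall>y\<in>H. mul x y \<in> H) \<and> (\<forall>x\<in>H. ginv x \<in> H)"

definition fixed_set :: "'a topology \<Rightarrow> ('g \<Rightarrow> 'a \<Rightarrow> 'a) \<Rightarrow> 'g set \<Rightarrow> 'a set" where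
  "fixed_set X act H = {x \<in> topspace X. \<forall>h\<in>H. act h x = x}"

definition G_connected ::
  "'g topology \<Rightarrow> ('g \<Rightarrow> 'g \<Rightarrow> 'g) \<Rightarrow> ('g \<Rightarrow> 'g) \<Rightarrow> 'g \<Rightarrow> 'a topology \<Rightarrow> ('g \<Rightarrow> 'a \<Rightarrow> 'a) \<Rightarrow> bool" where
  "G_connected TG mul ginv e X act \<longleftrightarrow>
     (\<forall>H. closed_subgroup TG mul ginv e H \<longrightarrow> path_connectedin X (fixed_set X act H))"

definition G_orbit :: "'g set \<Rightarrow> ('g \<Rightarrow> 'a \<Rightarrow> 'a) \<Rightarrow> 'a \<Rightarrow> 'a set" where
  "G_orbit G act b = {act g b | g. g \<in> G}"

definition G_invariant :: "'g set \<Rightarrow> ('g \<Rightarrow> 'a \<Rightarrow> 'a) \<Rightarrow> 'a set \<Rightarrow> bool" where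
  "G_invariant G act U \<longleftrightarrow> (\<forall>g\<in>G. \<forall>x\<in>U. act g x \<in> U)"

definition G_categorical :: "'g set \<Rightarrow> 'a topology \<Rightarrow> ('g \<Rightarrow> 'a \<Rightarrow> 'a) \<Rightarrow> 'a set \<Rightarrow> bool" where
  "G_categorical G B act U \<longleftrightarrow>
     U \<subseteq> topspace B \<and> G_invariant G act U \<and>
     (\<exists>f b. b \<in> topspace B \<and> f ` U \<subseteq> G_orbit G act b \<and>
        G_homotopic G (subtopology B U) act B act id f)"

text \<open>Least k such that B is covered by k open G-categorical sets (\<infinity> if none).\<close>
definition cat_G :: "'g set \<Rightarrow> 'a topology \<Rightarrow> ('g \<Rightarrow> 'a \<Rightarrow> 'a) \<Rightarrow> enat" where
  "cat_G G B act = Inf {enat k | k. \<exists>U :: nat \<Rightarrow> 'a set.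
      (\<forall>i<k. openin B (U i) \<and> G_categorical G B act (U i)) \<and>
      (\<Union>i<k. U i) = topspace B}"

text \<open>Equivariant sectional category of p : E \<rightarrow> B (\<infinity> if no such cover exists).\<close>
definition secat_G ::
  "'g set \<Rightarrow> 'e topology \<Rightarrow> ('g \<Rightarrow> 'e \<Rightarrow> 'e) \<Rightarrow> 'b topology \<Rightarrow> ('g \<Rightarrow> 'b \<Rightarrow> 'b) \<Rightarrow> ('e \<Rightarrow> 'b) \<Rightarrow> enat" where
  "secat_G G E actE B actB p = Inf {enat k | k. \<exists>U :: nat \<Rightarrow> 'b set.
      (\<forall>i<k. U i \<subseteq> topspace B \<and> openin B (U i) \<and> G_invariant G actB (U i) \<and>
         (\<exists>s. G_map G (subtopology B (U i)) actB E actE s \<and>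
              G_homotopic G (subtopology B (U i)) actB B actB (p \<circ> s) id)) \<and>
      (\<Union>i<k. U i) = topspace B}"

end

theory Submission
  imports Defs
begin


lemma quotient_cont:
  assumes K: "compact_space K" and Y: "Hausdorff_space Y"
    and q: "continuous_map K Y q" and qs: "q ` topspace K = topspace Y"
    and Psi: "continuous_map K Z Psi"
    and eq: "\<And>k. k \<in> topspace K \<Longrightarrow> Phi (q k) = Psi k"
  shows "continuous_map Y Z Phi"
  unfolding continuous_map_closedin
proof (intro conjI allI impI)
  show "Phi \<in> topspace Y \<rightarrow> topspace Z"
  proof (rule Pi_I)
    fix y assume "y \<in> topspace Y"
    then obtain k where "k \<in> topspace K" "y = q k" using qs by blast
    then show "Phi y \<in> topspace Z" using eq Psi by (auto simp: continuous_map_def)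
  qed
next
  fix C assume C: "closedin Z C"
  have "{y \<in> topspace Y. Phi y \<in> C} = q ` {k \<in> topspace K. Psi k \<in> C}"
  proof (intro equalityI subsetI)
    fix y assume y: "y \<in> {y \<in> topspace Y. Phi y \<in> C}"
    then obtain k where "k \<in> topspace K" "y = q k" using qs by blast
    then show "y \<in> q ` {k \<in> topspace K. Psi k \<in> C}" using y eq by auto
  next
    fix y assume "y \<in> q ` {k \<in> topspace K. Psi k \<in> C}"
    then show "y \<in> {y \<in> topspace Y. Phi y \<in> C}" using qs eq by auto
  qed
  moreover have "closedin K {k \<in> topspace K. Psi k \<in> C}"
    using Psi C closedin_continuous_map_preimage by blast
  hence "compactin Y (q ` {k \<in> topspace K. Psi k \<in> C})"
    using K q closedin_compact_space image_compactin by blast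
  ultimately show "closedin Y {y \<in> topspace Y. Phi y \<in> C}"
    using Y compactin_imp_closedin by metis
qed


lemma act_cont:
  assumes "G_space TG mul e X act" "continuous_map Z TG u" "continuous_map Z X w"
  shows "continuous_map Z X (\<lambda>z. act (u z) (w z))"
proof -
  have "continuous_map (prod_topology TG X) X (\<lambda>(g, x). act g x)"
    using assms(1) by (simp add: G_space_def)
  from continuous_map_compose[OF continuous_map_pairedI[OF assms(2) assms(3)] this]
  show ?thesis by (simp add: o_def)
qed

lemma key_section:
  fixes TG :: "'g topology" and mul :: "'g \<Rightarrow> 'g \<Rightarrow> 'g" and ginv :: "'g \<Rightarrow> 'g" and e :: 'g
    and E :: "'e topology" and actE :: "'g \<Rightarrow> 'e \<Rightarrow> 'e"
    and B :: "'b topology" and actB :: "'g \<Rightarrow> 'b \<Rightarrow> 'b"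
    and p :: "'e \<Rightarrow> 'b"
  assumes TGg: "topological_group TG mul ginv e"
    and cTG: "compact_space TG"
    and GB: "G_space TG mul e B actB" and HB: "Hausdorff_space B"
    and Gc: "G_connected TG mul ginv e B actB"
    and e0E: "e0 \<in> topspace E" and e0fix: "\<forall>g\<in>topspace TG. actE g e0 = e0"
    and b0B: "p e0 \<in> topspace B" and b0fix: "\<forall>g\<in>topspace TG. actB g (p e0) = p e0"
    and Uopen: "openin B U" and Ucat: "G_categorical (topspace TG) B actB U"
  shows "\<exists>s. G_map (topspace TG) (subtopology B U) actB E actE s \<and>
              G_homotopic (topspace TG) (subtopology B U) actB B actB (p \<circ> s) id"
proof -
  define G where "G = topspace TG"
  define b0 where "b0 = p e0"
  define X where "X = subtopology B U"
  have eG: "e \<in> G" and mulG: "\<And>x y. x \<in> G \<Longrightarrow> y \<in> G \<Longrightarrow> mul x y \<in> G"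
    and invG: "\<And>x. x \<in> G \<Longrightarrow> ginv x \<in> G"
    and assoc: "\<And>x y z. x \<in> G \<Longrightarrow> y \<in> G \<Longrightarrow> z \<in> G \<Longrightarrow> mul (mul x y) z = mul x (mul y z)"
    and unitl: "\<And>x. x \<in> G \<Longrightarrow> mul e x = x"
    and invl: "\<And>x. x \<in> G \<Longrightarrow> mul (ginv x) x = e" and invr: "\<And>x. x \<in> G \<Longrightarrow> mul x (ginv x) = e"
    using TGg by (auto simp: topological_group_def G_def)
  have actc: "continuous_map (prod_topology TG B) B (\<lambda>(g, x). actB g x)"
    and acte: "\<And>x. x \<in> topspace B \<Longrightarrow> actB e x = x"
    and actm: "\<And>g h x. g \<in> G \<Longrightarrow> h \<in> G \<Longrightarrow> x \<in> topspace B \<Longrightarrow> actB (mul g h) x = actB g (actB h x)"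
    using GB by (auto simp: G_space_def G_def)
  have actB_top: "\<And>g x. g \<in> G \<Longrightarrow> x \<in> topspace B \<Longrightarrow> actB g x \<in> topspace B"
  proof -
    fix g x assume "g \<in> G" "x \<in> topspace B"
    then have "(g, x) \<in> topspace (prod_topology TG B)" by (simp add: G_def)
    then have "(\<lambda>(g, x). actB g x) (g, x) \<in> topspace B"
      using actc continuous_map_def by (metis PiE)
    then show "actB g x \<in> topspace B" by simp
  qed
  obtain f b where bB: "b \<in> topspace B" and fO: "f ` U \<subseteq> G_orbit G actB b"
    and hom: "homotopic_with (equivariant G X actB actB) X B id f"
    and UB: "U \<subseteq> topspace B" and Uinv: "G_invariant G actB U"
    using Ucat by (auto simp: G_categorical_def G_homotopic_def G_def X_def)
  have topX: "topspace X = U" using UB by (auto simp: X_def)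
  define Orb where "Orb = G_orbit G actB b"
  have O_eq: "Orb = {actB g b | g. g \<in> G}" by (simp add: Orb_def G_orbit_def)
  have OB: "Orb \<subseteq> topspace B" using O_eq actB_top bB by auto
  define Gb where "Gb = {h \<in> G. actB h b = b}"
  have contb: "continuous_map TG B (\<lambda>h. actB h b)"
    using act_cont[OF GB continuous_map_id, of "\<lambda>h. b"] bB by simp
  have "closedin TG {h \<in> topspace TG. actB h b \<in> {b}}"
    using closedin_continuous_map_preimage[OF contb closedin_Hausdorff_singleton[OF HB bB]] .
  then have Gbclosed: "closedin TG Gb" by (simp add: Gb_def G_def)
  have "closed_subgroup TG mul ginv e Gb"
    unfolding closed_subgroup_def
  proof (intro conjI ballI)
    show "Gb \<subseteq> topspace TG" by (auto simp: Gb_def G_def)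
    show "closedin TG Gb" by (rule Gbclosed)
    show "e \<in> Gb" using eG acte bB by (simp add: Gb_def)
    fix x assume x: "x \<in> Gb"
    { fix y assume y: "y \<in> Gb"
      show "mul x y \<in> Gb" using x y mulG actm bB by (simp add: Gb_def) }
    have "actB (ginv x) b = actB (ginv x) (actB x b)" using x by (simp add: Gb_def)
    also have "\<dots> = actB (mul (ginv x) x) b" using x invG actm bB by (simp add: Gb_def)
    also have "\<dots> = b" using x invl acte bB by (simp add: Gb_def)
    finally show "ginv x \<in> Gb" using x invG by (simp add: Gb_def)
  qed
  then have pc: "path_connectedin B (fixed_set B actB Gb)"
    using Gc by (simp add: G_connected_def)
  have b_in: "b \<in> topspace (subtopology B (fixed_set B actB Gb))"
    using bB by (auto simp: fixed_set_def Gb_def)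
  have b0_in: "b0 \<in> topspace (subtopology B (fixed_set B actB Gb))"
    using b0B b0fix by (auto simp: fixed_set_def Gb_def b0_def G_def)
  obtain \<gamma> where \<gamma>p: "pathin (subtopology B (fixed_set B actB Gb)) \<gamma>"
    and \<gamma>0: "\<gamma> 0 = b" and \<gamma>1: "\<gamma> 1 = b0"
    using pc b_in b0_in unfolding path_connectedin_def path_connected_space_def by blast
  have \<gamma>c: "continuous_map (top_of_set {0..1}) B \<gamma>"
    and \<gamma>in: "\<And>t. t \<in> {0..1} \<Longrightarrow> \<gamma> t \<in> fixed_set B actB Gb"
    using \<gamma>p by (auto simp: pathin_def continuous_map_in_subtopology)
  have welldef: "actB g (\<gamma> t) = actB g' (\<gamma> t)"
    if g: "g \<in> G" and g': "g' \<in> G" and eqb: "actB g b = actB g' b" and t: "t \<in> {0..1}" for g g' t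
  proof -
    define h where "h = mul (ginv g') g"
    have hG: "h \<in> G" using g g' invG mulG by (simp add: h_def)
    have "actB h b = actB (ginv g') (actB g b)" using g g' invG actm bB by (simp add: h_def)
    also have "\<dots> = actB (ginv g') (actB g' b)" by (simp add: eqb)
    also have "\<dots> = actB (mul (ginv g') g') b" using g' invG actm bB by simp
    also have "\<dots> = b" using g' invl acte bB by simp
    finally have "h \<in> Gb" using hG by (simp add: Gb_def)
    then have fixh: "actB h (\<gamma> t) = \<gamma> t" using \<gamma>in[OF t] by (auto simp: fixed_set_def)
    have \<gamma>B: "\<gamma> t \<in> topspace B" using \<gamma>in[OF t] by (auto simp: fixed_set_def)
    have "mul g' h = g" unfolding h_def
      using g g' invG assoc invr unitl by (metis)
    then have "actB g' (\<gamma> t) = actB g (\<gamma> t)"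
      using fixh actm[OF g' hG \<gamma>B] by metis
    then show ?thesis by simp
  qed
  define Phi where "Phi = (\<lambda>z::'b \<times> real. actB (SOME g. g \<in> G \<and> fst z = actB g b) (\<gamma> (snd z)))"
  have PhiE: "Phi (actB g b, t) = actB g (\<gamma> t)" if "g \<in> G" "t \<in> {0..1}" for g t
  proof -
    have "\<exists>g'. g' \<in> G \<and> actB g b = actB g' b" using that by blast
    then have "(SOME g'. g' \<in> G \<and> actB g b = actB g' b) \<in> G \<and>
      actB g b = actB (SOME g'. g' \<in> G \<and> actB g b = actB g' b) b" by (rule someI_ex)
    then have "actB (SOME g'. g' \<in> G \<and> actB g b = actB g' b) (\<gamma> t) = actB g (\<gamma> t)"
      using welldef[of _ g t] that by metis
    then show ?thesis unfolding Phi_def by simp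
  qed
  define K where "K = prod_topology TG (top_of_set {0..1::real})"
  define Y where "Y = prod_topology (subtopology B Orb) (top_of_set {0..1::real})"
  have cK: "compact_space K" unfolding K_def
    using cTG by (simp add: compact_space_prod_topology compact_space_subtopology)
  have HY: "Hausdorff_space Y" unfolding Y_def
    using HB by (simp add: Hausdorff_space_prod_topology Hausdorff_space_subtopology)
  have topK: "topspace K = G \<times> {0..1}" by (simp add: K_def G_def)
  have topY: "topspace Y = Orb \<times> {0..1}" using OB by (auto simp: Y_def)
  have qc: "continuous_map K Y (\<lambda>z. (actB (fst z) b, snd z))"
    unfolding Y_def
  proof (intro continuous_map_pairedI)
    have "continuous_map K B (\<lambda>z. actB (fst z) b)"
      using act_cont[OF GB, of K fst "\<lambda>z. b"] bB by (simp add: K_def continuous_map_fst)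
    moreover have "(\<lambda>z. actB (fst z) b) \<in> topspace K \<rightarrow> Orb"
      using topK O_eq by auto
    ultimately show "continuous_map K (subtopology B Orb) (\<lambda>z. actB (fst z) b)"
      by (simp add: continuous_map_in_subtopology)
    show "continuous_map K (top_of_set {0..1}) snd" by (simp add: K_def continuous_map_snd)
  qed
  have qs: "(\<lambda>z. (actB (fst z) b, snd z)) ` topspace K = topspace Y"
    unfolding topK topY O_eq by force
  have Psic: "continuous_map K B (\<lambda>z. actB (fst z) (\<gamma> (snd z)))"
    using act_cont[OF GB, of K fst "\<lambda>z. \<gamma> (snd z)"]
      continuous_map_compose[OF continuous_map_snd \<gamma>c, of TG]
    by (simp add: K_def continuous_map_fst o_def)
  have Phic: "continuous_map Y B Phi"
  proof (rule quotient_cont[OF cK HY qc qs Psic])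
    fix k assume "k \<in> topspace K"
    then show "Phi (actB (fst k) b, snd k) = actB (fst k) (\<gamma> (snd k))"
      using PhiE topK by (auto simp: mem_Times_iff)
  qed
  have fc: "continuous_map X B f" using homotopic_with_imp_continuous_maps[OF hom] by simp
  have feq: "equivariant G X actB actB f" using homotopic_with_imp_property[OF hom] by simp
  have fO': "\<And>x. x \<in> U \<Longrightarrow> \<exists>g\<in>G. f x = actB g b" using fO O_eq Orb_def by blast
  define H where "H = (\<lambda>z::real \<times> 'b. if fst z = 0 then f (snd z) else if fst z = 1 then b0
                          else Phi (f (snd z), fst z))"
  have H0c: "continuous_map (prod_topology (top_of_set {0..1}) X) B (\<lambda>z. Phi (f (snd z), fst z))"
  proof -
    have "continuous_map (prod_topology (top_of_set {0..1}) X) (subtopology B Orb) (\<lambda>z. f (snd z))"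
      using continuous_map_compose[OF continuous_map_snd fc, of "top_of_set {0..1}"] fO topX Orb_def
      by (auto simp: continuous_map_in_subtopology o_def)
    then have "continuous_map (prod_topology (top_of_set {0..1}) X) Y (\<lambda>z. (f (snd z), fst z))"
      unfolding Y_def by (intro continuous_map_pairedI continuous_map_fst)
    from continuous_map_compose[OF this Phic] show ?thesis by (simp add: o_def)
  qed
  have Hc: "continuous_map (prod_topology (top_of_set {0..1}) X) B H"
  proof (rule continuous_map_eq[OF H0c])
    fix z assume z: "z \<in> topspace (prod_topology (top_of_set {0..1::real}) X)"
    then have t: "fst z \<in> {0..1}" and x: "snd z \<in> U" using topX by (auto simp: mem_Times_iff)
    obtain g where g: "g \<in> G" "f (snd z) = actB g b" using fO'[OF x] by blast
    show "Phi (f (snd z), fst z) = H z"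
      using PhiE[OF g(1) t] PhiE[OF g(1), of 0] PhiE[OF g(1), of 1] g \<gamma>0 \<gamma>1 b0fix
      by (auto simp: H_def b0_def G_def)
  qed
  have Heq: "equivariant G X actB actB (\<lambda>x. H (t, x))" if t: "t \<in> {0..1}" for t
    unfolding equivariant_def
  proof (intro ballI)
    fix g x assume g: "g \<in> G" and x: "x \<in> topspace X"
    then have xU: "x \<in> U" using topX by simp
    have fgx: "f (actB g x) = actB g (f x)" using feq g x by (simp add: equivariant_def)
    obtain g' where g': "g' \<in> G" "f x = actB g' b" using fO'[OF xU] by blast
    have "Phi (f (actB g x), t) = actB g (Phi (f x, t))"
    proof -
      have "f (actB g x) = actB (mul g g') b" using fgx g' g actm bB by simp
      then have "Phi (f (actB g x), t) = actB (mul g g') (\<gamma> t)" using PhiE mulG g g'(1) t by simp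
      also have "\<dots> = actB g (actB g' (\<gamma> t))" using actm g g'(1) \<gamma>in[OF t]
        by (simp add: fixed_set_def)
      also have "\<dots> = actB g (Phi (f x, t))" using PhiE g' t by simp
      finally show ?thesis .
    qed
    then show "H (t, actB g x) = actB g (H (t, x))"
      using fgx g b0fix by (simp add: H_def b0_def G_def)
  qed
  have hom2: "homotopic_with (equivariant G X actB actB) X B f (\<lambda>x. b0)"
    unfolding homotopic_with_def
    by (intro exI[of _ H] conjI Hc allI ballI Heq) (auto simp: H_def)
  have hom3: "homotopic_with (equivariant G X actB actB) X B (p \<circ> (\<lambda>x. e0)) id"
    using homotopic_with_symD[OF homotopic_with_trans[OF hom hom2]]
    by (simp add: o_def b0_def)
  have sG: "G_map G X actB E actE (\<lambda>x. e0)"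
    using e0E e0fix by (simp add: G_map_def equivariant_def G_def)
  show ?thesis using sG hom3 by (auto simp: G_homotopic_def G_def X_def)
qed

theorem proposition4p4:
  fixes TG :: "'g topology" and mul :: "'g \<Rightarrow> 'g \<Rightarrow> 'g" and ginv :: "'g \<Rightarrow> 'g" and e :: 'g
    and E :: "'e topology" and actE :: "'g \<Rightarrow> 'e \<Rightarrow> 'e"
    and B :: "'b topology" and actB :: "'g \<Rightarrow> 'b \<Rightarrow> 'b"
    and p :: "'e \<Rightarrow> 'b"
  assumes "topological_group TG mul ginv e"
    and "compact_space TG" and "Hausdorff_space TG"
    and "G_space TG mul e E actE" and "Hausdorff_space E"
    and "G_space TG mul e B actB" and "Hausdorff_space B"
    and "G_map (topspace TG) E actE B actB p"
    and "G_connected TG mul ginv e B actB"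
    and "fixed_set E actE (topspace TG) \<noteq> {}"
  shows "secat_G (topspace TG) E actE B actB p \<le> cat_G (topspace TG) B actB"
proof -
  obtain e0 where e0: "e0 \<in> topspace E" "\<forall>g\<in>topspace TG. actE g e0 = e0"
    using assms(10) by (auto simp: fixed_set_def)
  have pc: "continuous_map E B p" and peq: "equivariant (topspace TG) E actE actB p"
    using assms(8) by (auto simp: G_map_def)
  have b0B: "p e0 \<in> topspace B" using pc e0 by (auto simp: continuous_map_def)
  have b0fix: "\<forall>g\<in>topspace TG. actB g (p e0) = p e0"
    using peq e0 unfolding equivariant_def by metis
  show ?thesis unfolding secat_G_def cat_G_def
  proof (rule Inf_superset_mono, rule subsetI)
    fix n assume "n \<in> {enat k |k. \<exists>U :: nat \<Rightarrow> 'b set.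
      (\<forall>i<k. openin B (U i) \<and> G_categorical (topspace TG) B actB (U i)) \<and>
      (\<Union>i<k. U i) = topspace B}"
    then obtain k and U :: "nat \<Rightarrow> 'b set" where n: "n = enat k"
      and U: "\<forall>i<k. openin B (U i) \<and> G_categorical (topspace TG) B actB (U i)"
      and cov: "(\<Union>i<k. U i) = topspace B" by blast
    have "\<forall>i<k. U i \<subseteq> topspace B \<and> openin B (U i) \<and> G_invariant (topspace TG) actB (U i) \<and>
         (\<exists>s. G_map (topspace TG) (subtopology B (U i)) actB E actE s \<and>
              G_homotopic (topspace TG) (subtopology B (U i)) actB B actB (p \<circ> s) id)"
    proof (intro allI impI conjI)
      fix i assume i: "i < k"
      show "U i \<subseteq> topspace B" "openin B (U i)" "G_invariant (topspace TG) actB (U i)"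
        using U i by (auto simp: G_categorical_def)
      show "\<exists>s. G_map (topspace TG) (subtopology B (U i)) actB E actE s \<and>
              G_homotopic (topspace TG) (subtopology B (U i)) actB B actB (p \<circ> s) id"
        apply (rule key_section[OF assms(1) assms(2) assms(6) assms(7) assms(9)])
             apply (rule e0(1))
            apply (rule e0(2))
           apply (rule b0B)
          apply (rule b0fix)
        using U i by (auto)
    qed
    then show "n \<in> {enat k |k. \<exists>U :: nat \<Rightarrow> 'b set.
      (\<forall>i<k. U i \<subseteq> topspace B \<and> openin B (U i) \<and> G_invariant (topspace TG) actB (U i) \<and>
         (\<exists>s. G_map (topspace TG) (subtopology B (U i)) actB E actE s \<and>
              G_homotopic (topspace TG) (subtopology B (U i)) actB B actB (p \<circ> s) id)) \<and>
      (\<Union>i<k. U i) = topspace B}"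
      using n cov by blast
  qed
qed

end
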